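(* Let $(\Gamma,d)$ be a countable discrete metric space admitting an $F$-function, and let $(\mathcal{A},\{\mathcal{A}_X\}_{X\in\mathcal{P}_0(\Gamma)},\Phi)$ be a quantum many-body system satisfying (A1) whose interaction is bounded and has finite range $\mathfrak{r}>0$. Fix $X\in\mathcal{P}_0(\Gamma)$ and $n>0$, and put \[ H_{R,n}:=\sum_{Y\in\mathcal{P}_0(\Gamma),\ Y\cap X_{\mathrm{int}}(n+\mathfrak{r})\neq\emptyset}\Phi(Y). \] Then \[ \|[H_\Lambda,H_{R,n}]\|\le2\mathfrak{j}'\mathfrak{j}''\,|\partial_\Phi(X_{\mathrm{int}}(n+\mathfrak{r}))|\quad\text{for every }\Lambda\in\mathcal{P}_0(\Gamma)\text{ with }\Lambda\supseteq X_{\mathrm{int}}(n+\mathfrak{r}), \] \[ \|[H_\Lambda,H_{X(n+\mathfrak{r})}]\|\le2\mathfrak{j}'\mathfrak{j}''\,|\partial_\Phi(X(n+\mathfrak{r}))|\quad\text{for every }\Lambda\in\mathcal{P}_0(\Gamma)\text{ with }\Lambda\supseteq X(n+\mathfrak{r}). \]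
   Context: $(\Gamma,d)$ is a countable discrete metric space, $\mathcal{P}_0(\Gamma)$ its finite subsets, $\Lambda^c:=\Gamma\setminus\Lambda$, $d(x,\Lambda):=\inf_{y\in\Lambda}d(x,y)$, $\mathrm{diam}(Y):=\sup_{x,y\in Y}d(x,y)$. An $F$-function is a non-increasing $F:[0,\infty)\to(0,\infty)$ with $\sup_{x}\sum_{y}F(d(x,y))<\infty$ and $\sup_{x,y}\sum_{z}F(d(x,z))F(d(z,y))/F(d(x,y))<\infty$. A quantum many-body system is a triple $(\mathcal{A},\{\mathcal{A}_X\},\Phi)$: $\mathcal{A}$ a unital $C^*$-algebra, $\{\mathcal{A}_X\}_{X\in\mathcal{P}_0(\Gamma)}$ an increasing net of simple $C^*$-subalgebras with norm-dense union $\mathcal{A}_{\mathrm{loc}}$, $\Phi:\mathcal{P}_0(\Gamma)\to\mathcal{A}_{\mathrm{loc}}$ with $\Phi(X)=\Phi(X)^*\in\mathcal{A}_X$; for $\Lambda\subseteq\Gamma$, $\mathcal{A}_\Lambda$ is generated by the $\mathcal{A}_X$ with $X\subseteq\Lambda$ finite. (A1): $\Phi(X)$ commutes with $\mathcal{A}_{X^c}$. Bounded: $\sup_x\sum_{Y\ni x}\|\Phi(Y)\|/|Y|<\infty$; finite range $\mathfrak{r}$: $\Phi(Y)=0$ if $\mathrm{diam}(Y)>\mathfrak{r}$. $\mathfrak{j}':=\sup_x\sum_{Y\in\mathcal{P}_0(\Gamma),x\in Y}\|\Phi(Y)\|$, $\mathfrak{j}'':=\sup_x\sum_{Y\in\mathcal{P}_0(\Gamma),x\in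 Y}|Y|\|\Phi(Y)\|$. For $\Lambda\subseteq\Gamma$ finite, $H_\Lambda:=\sum_{Y\subseteq\Lambda}\Phi(Y)$. $\partial_\Phi\Lambda:=\{x\in\Lambda:\exists Y\in\mathcal{P}_0(\Gamma),\ x\in Y,\ Y\cap\Lambda^c\neq\emptyset,\ \Phi(Y)\neq0\}$. $X_{\mathrm{int}}(m):=\{x\in\Gamma:d(x,X^c)>m\}$, $X(m):=\{x\in\Gamma:d(x,X)\le m\}$. *)

theory Defs
  imports "HOL-Analysis.Analysis" "HOL-Library.Countable"
begin

text \<open>Distance from a point to a set, with the convention inf over the empty set = +infinity.\<close>
definition setdist_e :: "'b::metric_space \<Rightarrow> 'b set \<Rightarrow> ereal" where
  "setdist_e x L = (INF y\<in>L. ereal (dist x y))"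

definition Xint :: "'b::metric_space set \<Rightarrow> real \<Rightarrow> 'b set" where
  "Xint X m = {x. setdist_e x (- X) > ereal m}"

definition Xnbhd :: "'b::metric_space set \<Rightarrow> real \<Rightarrow> 'b set" where
  "Xnbhd X m = {x. setdist_e x X \<le> ereal m}"

definition F_function :: "('b::metric_space) itself \<Rightarrow> (real \<Rightarrow> real) \<Rightarrow> bool" where
  "F_function _ F \<longleftrightarrow>
     (\<forall>s t. 0 \<le> s \<longrightarrow> s \<le> t \<longrightarrow> F t \<le> F s) \<and>
     (\<forall>s. 0 \<le> s \<longrightarrow> 0 < F s) \<and>
     (\<forall>x::'b. (\<lambda>y. F (dist x y)) summable_on UNIV) \<and>
     (\<exists>C. \<forall>x::'b. (\<Sum>\<^sub>\<infinity>y. F (dist x y)) \<le> C) \<and>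
     (\<forall>x y::'b. (\<lambda>z. F (dist x z) * F (dist z y)) summable_on UNIV) \<and>
     (\<exists>C. \<forall>x y::'b. (\<Sum>\<^sub>\<infinity>z. F (dist x z) * F (dist z y)) / F (dist x y) \<le> C)"

definition cstar_algebra ::
  "(complex \<Rightarrow> 'a::{real_normed_algebra_1, banach} \<Rightarrow> 'a) \<Rightarrow> ('a \<Rightarrow> 'a) \<Rightarrow> bool" where
  "cstar_algebra scC st \<longleftrightarrow>
     (\<forall>r x. scC (complex_of_real r) x = r *\<^sub>R x) \<and>
     (\<forall>a x y. scC a (x + y) = scC a x + scC a y) \<and>
     (\<forall>a b x. scC (a + b) x = scC a x + scC b x) \<and>
     (\<forall>a b x. scC a (scC b x) = scC (a * b) x) \<and>
     (\<forall>a x. norm (scC a x) = cmod a * norm x) \<and>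
     (\<forall>a x y. scC a (x * y) = scC a x * y \<and> scC a (x * y) = x * scC a y) \<and>
     (\<forall>x. st (st x) = x) \<and>
     (\<forall>x y. st (x + y) = st x + st y) \<and>
     (\<forall>x y. st (x * y) = st y * st x) \<and>
     (\<forall>a x. st (scC a x) = scC (cnj a) (st x)) \<and>
     (\<forall>x. norm (st x * x) = (norm x)\<^sup>2)"

definition cstar_subalg ::
  "(complex \<Rightarrow> 'a::{real_normed_algebra_1, banach} \<Rightarrow> 'a) \<Rightarrow> ('a \<Rightarrow> 'a) \<Rightarrow> 'a set \<Rightarrow> bool" where
  "cstar_subalg scC st B \<longleftrightarrow>
     0 \<in> B \<and> closed B \<and>
     (\<forall>x\<in>B. \<forall>y\<in>B. x + y \<in> B \<and> x * y \<in> B) \<and>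
     (\<forall>a. \<forall>x\<in>B. scC a x \<in> B) \<and>
     (\<forall>x\<in>B. st x \<in> B)"

definition closed_ideal_in ::
  "(complex \<Rightarrow> 'a::{real_normed_algebra_1, banach} \<Rightarrow> 'a) \<Rightarrow> 'a set \<Rightarrow> 'a set \<Rightarrow> bool" where
  "closed_ideal_in scC B I \<longleftrightarrow>
     I \<subseteq> B \<and> 0 \<in> I \<and> closed I \<and>
     (\<forall>x\<in>I. \<forall>y\<in>I. x + y \<in> I) \<and>
     (\<forall>a. \<forall>x\<in>I. scC a x \<in> I) \<and>
     (\<forall>b\<in>B. \<forall>x\<in>I. b * x \<in> I \<and> x * b \<in> I)"

definition simple_cstar_subalg ::
  "(complex \<Rightarrow> 'a::{real_normed_algebra_1, banach} \<Rightarrow> 'a) \<Rightarrow> ('a \<Rightarrow> 'a) \<Rightarrow> 'a set \<Rightarrow> bool" where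
  "simple_cstar_subalg scC st B \<longleftrightarrow>
     cstar_subalg scC st B \<and> B \<noteq> {0} \<and>
     (\<forall>I. closed_ideal_in scC B I \<longrightarrow> I = {0} \<or> I = B)"

definition cstar_generated ::
  "(complex \<Rightarrow> 'a::{real_normed_algebra_1, banach} \<Rightarrow> 'a) \<Rightarrow> ('a \<Rightarrow> 'a) \<Rightarrow> 'a set \<Rightarrow> 'a set" where
  "cstar_generated scC st S = \<Inter> {B. cstar_subalg scC st B \<and> S \<subseteq> B}"

definition alg_of ::
  "(complex \<Rightarrow> 'a::{real_normed_algebra_1, banach} \<Rightarrow> 'a) \<Rightarrow> ('a \<Rightarrow> 'a) \<Rightarrow> ('b set \<Rightarrow> 'a set) \<Rightarrow> 'b set \<Rightarrow> 'a set" where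
  "alg_of scC st A L = cstar_generated scC st (\<Union> {A Z | Z. finite Z \<and> Z \<subseteq> L})"

definition qmb_system ::
  "(complex \<Rightarrow> 'a::{real_normed_algebra_1, banach} \<Rightarrow> 'a) \<Rightarrow> ('a \<Rightarrow> 'a) \<Rightarrow> ('b set \<Rightarrow> 'a set) \<Rightarrow> ('b set \<Rightarrow> 'a) \<Rightarrow> bool" where
  "qmb_system scC st A \<Phi> \<longleftrightarrow>
     cstar_algebra scC st \<and>
     (\<forall>X. finite X \<longrightarrow> simple_cstar_subalg scC st (A X)) \<and>
     (\<forall>X Y. finite X \<longrightarrow> finite Y \<longrightarrow> X \<subseteq> Y \<longrightarrow> A X \<subseteq> A Y) \<and>
     closure (\<Union> {A X | X. finite X}) = UNIV \<and>
     (\<forall>X. finite X \<longrightarrow> \<Phi> X \<in> A X \<and> st (\<Phi> X) = \<Phi> X)"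

definition A1 ::
  "(complex \<Rightarrow> 'a::{real_normed_algebra_1, banach} \<Rightarrow> 'a) \<Rightarrow> ('a \<Rightarrow> 'a) \<Rightarrow> ('b set \<Rightarrow> 'a set) \<Rightarrow> ('b set \<Rightarrow> 'a) \<Rightarrow> bool" where
  "A1 scC st A \<Phi> \<longleftrightarrow>
     (\<forall>X. finite X \<longrightarrow> (\<forall>b\<in>alg_of scC st A (- X). \<Phi> X * b = b * \<Phi> X))"

definition bounded_interaction :: "('b set \<Rightarrow> 'a::real_normed_vector) \<Rightarrow> bool" where
  "bounded_interaction \<Phi> \<longleftrightarrow>
     (\<forall>x. (\<lambda>Y. norm (\<Phi> Y) / real (card Y)) summable_on {Y. finite Y \<and> x \<in> Y}) \<and>
     (\<exists>C. \<forall>x. (\<Sum>\<^sub>\<infinity>Y\<in>{Y. finite Y \<and> x \<in> Y}. norm (\<Phi> Y) / real (card Y)) \<le> C)"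

definition finite_range :: "('b::metric_space set \<Rightarrow> 'a::zero) \<Rightarrow> real \<Rightarrow> bool" where
  "finite_range \<Phi> r \<longleftrightarrow> (\<forall>Y. finite Y \<longrightarrow> diameter Y > r \<longrightarrow> \<Phi> Y = 0)"

definition jprime :: "('b set \<Rightarrow> 'a::real_normed_vector) \<Rightarrow> real" where
  "jprime \<Phi> = (SUP x. \<Sum>\<^sub>\<infinity>Y\<in>{Y. finite Y \<and> x \<in> Y}. norm (\<Phi> Y))"

definition jsecond :: "('b set \<Rightarrow> 'a::real_normed_vector) \<Rightarrow> real" where
  "jsecond \<Phi> = (SUP x. \<Sum>\<^sub>\<infinity>Y\<in>{Y. finite Y \<and> x \<in> Y}. real (card Y) * norm (\<Phi> Y))"

definition H_loc :: "('b set \<Rightarrow> 'a::real_normed_vector) \<Rightarrow> 'b set \<Rightarrow> 'a" where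
  "H_loc \<Phi> L = (\<Sum>Y\<in>Pow L. \<Phi> Y)"

definition bdry_Phi :: "('b set \<Rightarrow> 'a::zero) \<Rightarrow> 'b set \<Rightarrow> 'b set" where
  "bdry_Phi \<Phi> L = {x\<in>L. \<exists>Y. finite Y \<and> x \<in> Y \<and> Y \<inter> - L \<noteq> {} \<and> \<Phi> Y \<noteq> 0}"

definition commutator :: "'a::ring \<Rightarrow> 'a \<Rightarrow> 'a" where
  "commutator a b = a * b - b * a"

end

theory Submission
  imports Defs
begin
lemma sum_UN_le_nonneg:
  fixes f :: "'x \<Rightarrow> real"
  assumes "finite I" "\<And>i. i \<in> I \<Longrightarrow> finite (A i)" "\<And>x. f x \<ge> 0"
  shows "sum f (\<Union>i\<in>I. A i) \<le> (\<Sum>i\<in>I. sum f (A i))"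
  using assms
proof (induction I rule: finite_induct)
  case empty then show ?case by simp
next
  case (insert i I)
  have "sum f (\<Union>j\<in>insert i I. A j) = sum f (A i \<union> (\<Union>j\<in>I. A j))" by simp
  also have "\<dots> \<le> sum f (A i) + sum f (\<Union>j\<in>I. A j)"
  proof -
    have fa: "finite (A i)" "finite (\<Union>j\<in>I. A j)" using insert by auto
    have "sum f (A i \<inter> (\<Union>j\<in>I. A j)) \<ge> 0" by (rule sum_nonneg) (use insert in auto)
    then show ?thesis using sum_Un[OF fa, of f] by simp
  qed
  also have "\<dots> \<le> sum f (A i) + (\<Sum>j\<in>I. sum f (A j))" using insert by simp
  finally show ?case using insert by simp
qed

lemma key_bound:
  fixes \<Phi> :: "'b set \<Rightarrow> 'a::real_normed_algebra_1"
  assumes S1: "finite S1" and S2: "finite S2" and T1: "T \<subseteq> S1" and T2: "T \<subseteq> S2"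
    and fin1: "\<forall>Y\<in>S1. finite Y" and fin2: "\<forall>Z\<in>S2. finite Z"
    and comm: "\<forall>Y\<in>S1. \<forall>Z\<in>S2. Y \<inter> Z = {} \<longrightarrow> \<Phi> Y * \<Phi> Z = \<Phi> Z * \<Phi> Y"
    and bad: "\<forall>Y\<in>S1. \<forall>Z\<in>S2. (Y \<notin> T \<or> Z \<notin> T) \<longrightarrow> Y \<inter> Z \<noteq> {} \<longrightarrow> \<Phi> Y \<noteq> 0 \<longrightarrow> \<Phi> Z \<noteq> 0
              \<longrightarrow> (\<exists>x\<in>B. x \<in> Y)"
    and Bfin: "finite B"
    and Nfin: "\<forall>x. finite {Y. finite Y \<and> x \<in> Y \<and> \<Phi> Y \<noteq> 0}"
    and J1: "\<forall>x. (\<Sum>Y\<in>{Y. finite Y \<and> x \<in> Y \<and> \<Phi> Y \<noteq> 0}. norm (\<Phi> Y)) \<le> J1"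
    and J2: "\<forall>x. (\<Sum>Y\<in>{Y. finite Y \<and> x \<in> Y \<and> \<Phi> Y \<noteq> 0}. real (card Y) * norm (\<Phi> Y)) \<le> J2"
    and J1nn: "0 \<le> J1"
  shows "norm (commutator (sum \<Phi> S1) (sum \<Phi> S2)) \<le> 2 * J1 * J2 * real (card B)"
proof -
  define N where "N x = {Y. finite Y \<and> x \<in> Y \<and> \<Phi> Y \<noteq> 0}" for x
  define c where "c p = \<Phi> (fst p) * \<Phi> (snd p) - \<Phi> (snd p) * \<Phi> (fst p)" for p
  define g where "g p = 2 * norm (\<Phi> (fst p)) * norm (\<Phi> (snd p))" for p
  define Q where "Q = S1 \<times> S2 - T \<times> T"
  define Big where "Big = (\<Union>x\<in>B. \<Union>W\<in>N x. \<Union>y\<in>W. {W} \<times> N y)"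
  have Nf: "finite (N x)" for x using Nfin by (simp add: N_def)
  have gnn: "g p \<ge> 0" for p by (simp add: g_def)
  have cg: "norm (c p) \<le> g p" for p
  proof -
    have "norm (c p) \<le> norm (\<Phi> (fst p) * \<Phi> (snd p)) + norm (\<Phi> (snd p) * \<Phi> (fst p))"
      unfolding c_def by (rule norm_triangle_ineq4)
    also have "\<dots> \<le> norm (\<Phi> (fst p)) * norm (\<Phi> (snd p)) + norm (\<Phi> (snd p)) * norm (\<Phi> (fst p))"
      by (intro add_mono norm_mult_ineq)
    finally show ?thesis by (simp add: g_def)
  qed
  have eq1: "commutator (sum \<Phi> S1) (sum \<Phi> S2) = sum c (S1 \<times> S2)"
  proof -
    have "commutator (sum \<Phi> S1) (sum \<Phi> S2)
        = (\<Sum>Y\<in>S1. \<Sum>Z\<in>S2. \<Phi> Y * \<Phi> Z) - (\<Sum>Z\<in>S2. \<Sum>Y\<in>S1. \<Phi> Z * \<Phi> Y)"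
      by (simp add: commutator_def sum_product)
    also have "\<dots> = (\<Sum>Y\<in>S1. \<Sum>Z\<in>S2. \<Phi> Y * \<Phi> Z) - (\<Sum>Y\<in>S1. \<Sum>Z\<in>S2. \<Phi> Z * \<Phi> Y)"
      by (subst sum.swap) simp
    also have "\<dots> = (\<Sum>Y\<in>S1. \<Sum>Z\<in>S2. c (Y, Z))"
      by (simp add: c_def sum_subtractf)
    also have "\<dots> = sum c (S1 \<times> S2)" by (simp add: sum.cartesian_product)
    finally show ?thesis .
  qed
  have TT: "sum c (T \<times> T) = 0"
  proof -
    have "sum c (T \<times> T) = (\<Sum>Y\<in>T. \<Sum>Z\<in>T. \<Phi> Y * \<Phi> Z) - (\<Sum>Y\<in>T. \<Sum>Z\<in>T. \<Phi> Z * \<Phi> Y)"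
      by (simp add: c_def sum_subtractf sum.cartesian_product case_prod_beta)
    also have "(\<Sum>Y\<in>T. \<Sum>Z\<in>T. \<Phi> Z * \<Phi> Y) = (\<Sum>Y\<in>T. \<Sum>Z\<in>T. \<Phi> Y * \<Phi> Z)"
      by (rule sum.swap)
    finally show ?thesis by simp
  qed
  have finT: "finite T" using T1 S1 finite_subset by blast
  have eq2: "sum c (S1 \<times> S2) = sum c Q"
  proof -
    have "sum c (S1 \<times> S2) = sum c (S1 \<times> S2 - T \<times> T) + sum c (T \<times> T)"
      by (rule sum.subset_diff) (use T1 T2 S1 S2 in auto)
    then show ?thesis using TT by (simp add: Q_def)
  qed
  have finQ: "finite Q" using S1 S2 by (simp add: Q_def)
  have finBig: "finite Big" unfolding Big_def
    using Bfin Nf by (auto simp: N_def intro!: finite_UN_I)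
  have inBig: "p \<in> Big" if "p \<in> Q" "c p \<noteq> 0" for p
  proof -
    obtain Y Z where p: "p = (Y, Z)" by force
    have Y: "Y \<in> S1" and Z: "Z \<in> S2" and nT: "Y \<notin> T \<or> Z \<notin> T" using that p by (auto simp: Q_def)
    have YZ: "Y \<inter> Z \<noteq> {}" using comm Y Z that(2) p by (auto simp: c_def)
    have nY: "\<Phi> Y \<noteq> 0" and nZ: "\<Phi> Z \<noteq> 0" using that(2) p by (auto simp: c_def)
    obtain x where x: "x \<in> B" "x \<in> Y" using bad Y Z nT YZ nY nZ by blast
    obtain y where y: "y \<in> Y" "y \<in> Z" using YZ by blast
    have "Y \<in> N x" using x nY fin1 Y by (simp add: N_def)
    moreover have "Z \<in> N y" using y nZ fin2 Z by (simp add: N_def)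
    ultimately show ?thesis using x y p unfolding Big_def by blast
  qed
  have "norm (sum c Q) \<le> (\<Sum>p\<in>Q. norm (c p))" by (rule norm_sum)
  also have "\<dots> = (\<Sum>p\<in>Q \<inter> Big. norm (c p))"
    by (rule sum.mono_neutral_right) (use finQ inBig in auto)
  also have "\<dots> \<le> (\<Sum>p\<in>Q \<inter> Big. g p)" by (rule sum_mono) (rule cg)
  also have "\<dots> \<le> sum g Big" by (rule sum_mono2) (use finBig gnn in auto)
  also have "\<dots> \<le> (\<Sum>x\<in>B. sum g (\<Union>W\<in>N x. \<Union>y\<in>W. {W} \<times> N y))"
    unfolding Big_def by (rule sum_UN_le_nonneg) (use Bfin Nf gnn in \<open>auto simp: N_def intro!: finite_UN_I\<close>)
  also have "\<dots> \<le> (\<Sum>x\<in>B. 2 * J1 * J2)"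
  proof (rule sum_mono)
    fix x assume "x \<in> B"
    have "sum g (\<Union>W\<in>N x. \<Union>y\<in>W. {W} \<times> N y) \<le> (\<Sum>W\<in>N x. sum g (\<Union>y\<in>W. {W} \<times> N y))"
      by (rule sum_UN_le_nonneg) (use Nf gnn in \<open>auto simp: N_def intro!: finite_UN_I\<close>)
    also have "\<dots> \<le> (\<Sum>W\<in>N x. 2 * J1 * (real (card W) * norm (\<Phi> W)))"
    proof (rule sum_mono)
      fix W assume W: "W \<in> N x"
      have fW: "finite W" using W by (simp add: N_def)
      have "sum g (\<Union>y\<in>W. {W} \<times> N y) \<le> (\<Sum>y\<in>W. sum g ({W} \<times> N y))"
        by (rule sum_UN_le_nonneg) (use fW Nf gnn in auto)
      also have "\<dots> \<le> (\<Sum>y\<in>W. 2 * norm (\<Phi> W) * J1)"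
      proof (rule sum_mono)
        fix y assume "y \<in> W"
        have "sum g ({W} \<times> N y) = (\<Sum>V\<in>N y. g (W, V))"
          using sum.cartesian_product[of "\<lambda>a b. g (a, b)" "N y" "{W}"] by simp
        also have "\<dots> = 2 * norm (\<Phi> W) * (\<Sum>V\<in>N y. norm (\<Phi> V))"
          by (simp add: g_def sum_distrib_left)
        also have "\<dots> \<le> 2 * norm (\<Phi> W) * J1"
          using J1 by (intro mult_left_mono) (auto simp: N_def)
        finally show "sum g ({W} \<times> N y) \<le> 2 * norm (\<Phi> W) * J1" .
      qed
      also have "\<dots> = 2 * J1 * (real (card W) * norm (\<Phi> W))" by simp
      finally show "sum g (\<Union>y\<in>W. {W} \<times> N y) \<le> 2 * J1 * (real (card W) * norm (\<Phi> W))" .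
    qed
    also have "\<dots> = 2 * J1 * (\<Sum>W\<in>N x. real (card W) * norm (\<Phi> W))"
      by (simp add: sum_distrib_left)
    also have "\<dots> \<le> 2 * J1 * J2" using J2 J1nn by (intro mult_left_mono) (auto simp: N_def)
    finally show "sum g (\<Union>W\<in>N x. \<Union>y\<in>W. {W} \<times> N y) \<le> 2 * J1 * J2" .
  qed
  also have "\<dots> = 2 * J1 * J2 * real (card B)" by simp
  finally show ?thesis using eq1 eq2 by simp
qed

lemma ball_bound:
  assumes Ffun: "F_function TYPE('b::metric_space) F" and R: "R \<ge> 0"
  shows "\<exists>K. \<forall>x::'b. finite {y. dist x y \<le> R} \<and> real (card {y. dist x y \<le> R}) \<le> K"
proof -
  have mono: "\<forall>s t. 0 \<le> s \<longrightarrow> s \<le> t \<longrightarrow> F t \<le> F s" and pos: "\<forall>s. 0 \<le> s \<longrightarrow> 0 < F s"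
    and summ: "\<forall>x::'b. (\<lambda>y. F (dist x y)) summable_on UNIV"
    using Ffun unfolding F_function_def by blast+
  obtain C where C: "\<forall>x::'b. (\<Sum>\<^sub>\<infinity>y. F (dist x y)) \<le> C" using Ffun unfolding F_function_def by blast
  have FR: "F R > 0" using pos R by auto
  have Fnn: "0 \<le> F (dist x y)" for x y :: 'b using pos by (simp add: less_imp_le)
  have cardS: "real (card S) \<le> C / F R" if "finite S" "S \<subseteq> {y. dist x y \<le> R}" for S and x :: 'b
  proof -
    have "real (card S) * F R = (\<Sum>y\<in>S. F R)" by simp
    also have "\<dots> \<le> (\<Sum>y\<in>S. F (dist x y))"
      using that mono by (intro sum_mono) auto
    also have "\<dots> \<le> (\<Sum>\<^sub>\<infinity>y. F (dist x y))"
      using summ that Fnn by (intro finite_sum_le_infsum) auto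
    also have "\<dots> \<le> C" using C by blast
    finally show ?thesis using FR by (simp add: field_simps)
  qed
  have fin: "finite {y. dist x y \<le> R}" for x :: 'b
  proof (rule ccontr)
    assume "infinite {y. dist x y \<le> R}"
    then obtain S where S: "finite S" "card S = nat (ceiling (C / F R)) + 1" "S \<subseteq> {y. dist x y \<le> R}"
      using infinite_arbitrarily_large by blast
    have "real (card S) \<le> C / F R" using cardS S by blast
    then show False using S(2) by linarith
  qed
  show ?thesis using fin cardS by blast
qed

lemma phi_comm:
  assumes sys: "qmb_system scC st A \<Phi>" and a1: "A1 scC st A \<Phi>"
    and "finite Y" "finite Z" "Y \<inter> Z = {}"
  shows "\<Phi> Y * \<Phi> Z = \<Phi> Z * \<Phi> Y"
proof -
  have "\<Phi> Z \<in> A Z" using sys assms by (simp add: qmb_system_def)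
  then have "\<Phi> Z \<in> \<Union> {A Z' | Z'. finite Z' \<and> Z' \<subseteq> - Y}" using assms by blast
  then have "\<Phi> Z \<in> alg_of scC st A (- Y)"
    unfolding alg_of_def cstar_generated_def by blast
  then show ?thesis using a1 assms unfolding A1_def by blast
qed

lemma lemma3p4_aux:
  fixes scC :: "complex \<Rightarrow> 'a::{real_normed_algebra_1, banach} \<Rightarrow> 'a"
    and st :: "'a \<Rightarrow> 'a"
    and A :: "'b::{metric_space, countable} set \<Rightarrow> 'a set"
    and \<Phi> :: "'b set \<Rightarrow> 'a"
    and F :: "real \<Rightarrow> real"
    and r n :: real
    and X :: "'b set"
  assumes Ffun: "F_function TYPE('b) F"
    and sys: "qmb_system scC st A \<Phi>"
    and a1: "A1 scC st A \<Phi>"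
    and bdd: "bounded_interaction \<Phi>"
    and rng: "finite_range \<Phi> r" and r_pos: "r > 0"
  shows "(\<forall>x. finite {Y. finite Y \<and> x \<in> Y \<and> \<Phi> Y \<noteq> 0})
     \<and> (\<forall>x. (\<Sum>Y\<in>{Y. finite Y \<and> x \<in> Y \<and> \<Phi> Y \<noteq> 0}. norm (\<Phi> Y)) \<le> jprime \<Phi>)
     \<and> (\<forall>x. (\<Sum>Y\<in>{Y. finite Y \<and> x \<in> Y \<and> \<Phi> Y \<noteq> 0}. real (card Y) * norm (\<Phi> Y)) \<le> jsecond \<Phi>)
     \<and> 0 \<le> jprime \<Phi>"
proof -
  define N where "N x = {Y. finite Y \<and> x \<in> Y \<and> \<Phi> Y \<noteq> 0}" for x
  obtain K where K: "\<forall>x::'b. finite {y. dist x y \<le> r} \<and> real (card {y. dist x y \<le> r}) \<le> K"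
    using ball_bound[OF Ffun, of r] r_pos by auto
  have Nsub: "N x \<subseteq> Pow {y. dist x y \<le> r}" for x
  proof
    fix Y assume Y: "Y \<in> N x"
    then have fY: "finite Y" and xY: "x \<in> Y" and nz: "\<Phi> Y \<noteq> 0" by (auto simp: N_def)
    have d: "diameter Y \<le> r" using rng fY nz unfolding finite_range_def by force
    have "dist x y \<le> r" if "y \<in> Y" for y
      using diameter_bounded_bound[OF finite_imp_bounded[OF fY] xY that] d by linarith
    then show "Y \<in> Pow {y. dist x y \<le> r}" by auto
  qed
  have Nf: "finite (N x)" for x using Nsub K finite_subset by (metis finite_Pow_iff)
  have cardY: "real (card Y) \<le> K" if "Y \<in> N x" for Y x
  proof -
    have "card Y \<le> card {y. dist x y \<le> r}" using Nsub that K by (intro card_mono) auto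
    then show ?thesis using K by (meson of_nat_le_iff order_trans)
  qed
  have cardpos: "card Y > 0" if "Y \<in> N x" for Y x
    using that by (auto simp: N_def card_gt_0_iff)
  obtain Cb where Cb: "\<forall>x. (\<Sum>\<^sub>\<infinity>Y\<in>{Y. finite Y \<and> x \<in> Y}. norm (\<Phi> Y) / real (card Y)) \<le> Cb"
    using bdd unfolding bounded_interaction_def by blast
  have bsumm: "(\<lambda>Y. norm (\<Phi> Y) / real (card Y)) summable_on {Y. finite Y \<and> x \<in> Y}" for x
    using bdd unfolding bounded_interaction_def by blast
  define j1 where "j1 x = (\<Sum>Y\<in>N x. norm (\<Phi> Y))" for x
  define j2 where "j2 x = (\<Sum>Y\<in>N x. real (card Y) * norm (\<Phi> Y))" for x
  have j1b: "j1 x \<le> K * Cb" for x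
  proof -
    have "j1 x \<le> (\<Sum>Y\<in>N x. K * (norm (\<Phi> Y) / real (card Y)))"
      unfolding j1_def
    proof (rule sum_mono)
      fix Y assume Y: "Y \<in> N x"
      have "norm (\<Phi> Y) = real (card Y) * (norm (\<Phi> Y) / real (card Y))"
        using cardpos[OF Y] by simp
      also have "\<dots> \<le> K * (norm (\<Phi> Y) / real (card Y))"
        using cardY[OF Y] by (intro mult_right_mono) auto
      finally show "norm (\<Phi> Y) \<le> K * (norm (\<Phi> Y) / real (card Y))" .
    qed
    also have "\<dots> = K * (\<Sum>Y\<in>N x. norm (\<Phi> Y) / real (card Y))" by (simp add: sum_distrib_left)
    also have "\<dots> \<le> K * Cb"
    proof (rule mult_left_mono)
      have "(\<Sum>Y\<in>N x. norm (\<Phi> Y) / real (card Y))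
           \<le> (\<Sum>\<^sub>\<infinity>Y\<in>{Y. finite Y \<and> x \<in> Y}. norm (\<Phi> Y) / real (card Y))"
        by (rule finite_sum_le_infsum) (use bsumm Nf in \<open>auto simp: N_def\<close>)
      then show "(\<Sum>Y\<in>N x. norm (\<Phi> Y) / real (card Y)) \<le> Cb" using Cb by (meson order_trans)
      show "0 \<le> K" using K by (meson of_nat_0_le_iff order_trans)
    qed
    finally show ?thesis .
  qed
  have Knn: "0 \<le> K" using K by (meson of_nat_0_le_iff order_trans)
  have j2b: "j2 x \<le> K * (K * Cb)" for x
  proof -
    have "j2 x \<le> (\<Sum>Y\<in>N x. K * norm (\<Phi> Y))"
      unfolding j2_def by (rule sum_mono) (use cardY in \<open>auto intro: mult_right_mono\<close>)
    also have "\<dots> = K * j1 x" by (simp add: j1_def sum_distrib_left)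
    also have "\<dots> \<le> K * (K * Cb)"
      using j1b Knn by (intro mult_left_mono) auto
    finally show ?thesis .
  qed
  have jp: "jprime \<Phi> = (SUP x. j1 x)"
  proof -
    have "(\<Sum>\<^sub>\<infinity>Y\<in>{Y. finite Y \<and> x \<in> Y}. norm (\<Phi> Y)) = j1 x" for x
    proof -
      have "(\<Sum>\<^sub>\<infinity>Y\<in>{Y. finite Y \<and> x \<in> Y}. norm (\<Phi> Y)) = (\<Sum>\<^sub>\<infinity>Y\<in>N x. norm (\<Phi> Y))"
        by (rule infsum_cong_neutral) (auto simp: N_def)
      then show ?thesis using Nf by (simp add: j1_def)
    qed
    then show ?thesis unfolding jprime_def by simp
  qed
  have js: "jsecond \<Phi> = (SUP x. j2 x)"
  proof -
    have "(\<Sum>\<^sub>\<infinity>Y\<in>{Y. finite Y \<and> x \<in> Y}. real (card Y) * norm (\<Phi> Y)) = j2 x" for x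
    proof -
      have "(\<Sum>\<^sub>\<infinity>Y\<in>{Y. finite Y \<and> x \<in> Y}. real (card Y) * norm (\<Phi> Y))
           = (\<Sum>\<^sub>\<infinity>Y\<in>N x. real (card Y) * norm (\<Phi> Y))"
        by (rule infsum_cong_neutral) (auto simp: N_def)
      then show ?thesis using Nf by (simp add: j2_def)
    qed
    then show ?thesis unfolding jsecond_def by simp
  qed
  have b1: "bdd_above (range j1)" by (rule bdd_aboveI2[where M="K*Cb"]) (rule j1b)
  have b2: "bdd_above (range j2)" by (rule bdd_aboveI2[where M="K*(K*Cb)"]) (rule j2b)
  have u1: "j1 x \<le> jprime \<Phi>" for x unfolding jp by (rule cSUP_upper[OF UNIV_I b1])
  have u2: "j2 x \<le> jsecond \<Phi>" for x unfolding js by (rule cSUP_upper[OF UNIV_I b2])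
  have "0 \<le> j1 undefined" unfolding j1_def by (rule sum_nonneg) simp
  then have "0 \<le> jprime \<Phi>" using u1 by (meson order_trans)
  then show ?thesis using Nf u1 u2 unfolding N_def j1_def j2_def by blast
qed

theorem lemma3p4:
  fixes scC :: "complex \<Rightarrow> 'a::{real_normed_algebra_1, banach} \<Rightarrow> 'a"
    and st :: "'a \<Rightarrow> 'a"
    and A :: "'b::{metric_space, countable} set \<Rightarrow> 'a set"
    and \<Phi> :: "'b set \<Rightarrow> 'a"
    and F :: "real \<Rightarrow> real"
    and r n :: real
    and X :: "'b set"
  assumes discrete: "\<forall>x::'b. \<exists>e>0. \<forall>y. dist x y < e \<longrightarrow> y = x"
    and Ffun: "F_function TYPE('b) F"
    and sys: "qmb_system scC st A \<Phi>"
    and a1: "A1 scC st A \<Phi>"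
    and bdd: "bounded_interaction \<Phi>"
    and rng: "finite_range \<Phi> r" and r_pos: "r > 0"
    and X_fin: "finite X" and n_pos: "n > 0"
  shows "(\<forall>L. finite L \<and> Xint X (n + r) \<subseteq> L \<longrightarrow>
            norm (commutator (H_loc \<Phi> L)
                    (\<Sum>\<^sub>\<infinity>Y\<in>{Y. finite Y \<and> Y \<inter> Xint X (n + r) \<noteq> {}}. \<Phi> Y))
            \<le> 2 * jprime \<Phi> * jsecond \<Phi> * real (card (bdry_Phi \<Phi> (Xint X (n + r)))))
       \<and> (\<forall>L. finite L \<and> Xnbhd X (n + r) \<subseteq> L \<longrightarrow>
            norm (commutator (H_loc \<Phi> L) (H_loc \<Phi> (Xnbhd X (n + r))))
            \<le> 2 * jprime \<Phi> * jsecond \<Phi> * real (card (bdry_Phi \<Phi> (Xnbhd X (n + r)))))"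
proof -
  note aux = lemma3p4_aux[OF Ffun sys a1 bdd rng r_pos]
  have Nfin: "\<forall>x. finite {Y. finite Y \<and> x \<in> Y \<and> \<Phi> Y \<noteq> 0}" using aux by blast
  have J1: "\<forall>x. (\<Sum>Y\<in>{Y. finite Y \<and> x \<in> Y \<and> \<Phi> Y \<noteq> 0}. norm (\<Phi> Y)) \<le> jprime \<Phi>" using aux by blast
  have J2: "\<forall>x. (\<Sum>Y\<in>{Y. finite Y \<and> x \<in> Y \<and> \<Phi> Y \<noteq> 0}. real (card Y) * norm (\<Phi> Y)) \<le> jsecond \<Phi>"
    using aux by blast
  have J1nn: "0 \<le> jprime \<Phi>" using aux by blast
  have comm: "\<And>Y Z. finite Y \<Longrightarrow> finite Z \<Longrightarrow> Y \<inter> Z = {} \<Longrightarrow> \<Phi> Y * \<Phi> Z = \<Phi> Z * \<Phi> Y"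
    using phi_comm[OF sys a1] by blast
  show ?thesis
  proof (intro conjI allI impI; elim conjE)
    fix L assume L: "finite L" and IL: "Xint X (n + r) \<subseteq> L"
    define I where "I = Xint X (n + r)"
    define S where "S = {Y. finite Y \<and> Y \<inter> I \<noteq> {} \<and> \<Phi> Y \<noteq> 0}"
    have finI: "finite I" using L IL finite_subset unfolding I_def by blast
    have "S \<subseteq> (\<Union>x\<in>I. {Y. finite Y \<and> x \<in> Y \<and> \<Phi> Y \<noteq> 0})" unfolding S_def by blast
    then have finS: "finite S" using finI Nfin by (meson finite_UN_I finite_subset)
    have HR: "(\<Sum>\<^sub>\<infinity>Y\<in>{Y. finite Y \<and> Y \<inter> I \<noteq> {}}. \<Phi> Y) = sum \<Phi> S"
    proof -
      have "(\<Sum>\<^sub>\<infinity>Y\<in>{Y. finite Y \<and> Y \<inter> I \<noteq> {}}. \<Phi> Y) = (\<Sum>\<^sub>\<infinity>Y\<in>S. \<Phi> Y)"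
        by (rule infsum_cong_neutral) (auto simp: S_def)
      then show ?thesis using finS by simp
    qed
    have finB: "finite (bdry_Phi \<Phi> I)" using finI unfolding bdry_Phi_def by simp
    have "norm (commutator (sum \<Phi> S) (sum \<Phi> (Pow L)))
          \<le> 2 * jprime \<Phi> * jsecond \<Phi> * real (card (bdry_Phi \<Phi> I))"
    proof (rule key_bound[OF finS _ _ _ _ _ _ _ finB Nfin J1 J2 J1nn, where T = "S \<inter> Pow L"])
      show "finite (Pow L)" using L by simp
      show "\<forall>Y\<in>S. finite Y" by (simp add: S_def)
      show "\<forall>Z\<in>Pow L. finite Z" using L finite_subset by blast
      show "\<forall>Y\<in>S. \<forall>Z\<in>Pow L. Y \<inter> Z = {} \<longrightarrow> \<Phi> Y * \<Phi> Z = \<Phi> Z * \<Phi> Y"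
        using comm L finite_subset unfolding S_def by blast
      show "\<forall>Y\<in>S. \<forall>Z\<in>Pow L. (Y \<notin> S \<inter> Pow L \<or> Z \<notin> S \<inter> Pow L) \<longrightarrow> Y \<inter> Z \<noteq> {} \<longrightarrow>
              \<Phi> Y \<noteq> 0 \<longrightarrow> \<Phi> Z \<noteq> 0 \<longrightarrow> (\<exists>x\<in>bdry_Phi \<Phi> I. x \<in> Y)"
      proof (intro ballI impI)
        fix Y Z assume Y: "Y \<in> S" and Z: "Z \<in> Pow L" and nT: "Y \<notin> S \<inter> Pow L \<or> Z \<notin> S \<inter> Pow L"
          and YZ: "Y \<inter> Z \<noteq> {}" and nY: "\<Phi> Y \<noteq> 0" and nZ: "\<Phi> Z \<noteq> 0"
        have fY: "finite Y" and YI: "Y \<inter> I \<noteq> {}" using Y by (auto simp: S_def)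
        have fZ: "finite Z" using Z L finite_subset by blast
        have "Y \<inter> - I \<noteq> {}"
        proof (cases "Y \<subseteq> L")
          case False then show ?thesis using IL unfolding I_def by blast
        next
          case True
          then have "Z \<notin> S" using nT Y Z by blast
          then have "Z \<inter> I = {}" using fZ nZ by (auto simp: S_def)
          then show ?thesis using YZ by blast
        qed
        then show "\<exists>x\<in>bdry_Phi \<Phi> I. x \<in> Y" using YI fY nY unfolding bdry_Phi_def by blast
      qed
    qed auto
    moreover have "norm (commutator (sum \<Phi> (Pow L)) (sum \<Phi> S)) = norm (commutator (sum \<Phi> S) (sum \<Phi> (Pow L)))"
      by (metis commutator_def minus_diff_eq norm_minus_cancel)
    ultimately show "norm (commutator (H_loc \<Phi> L)
                    (\<Sum>\<^sub>\<infinity>Y\<in>{Y. finite Y \<and> Y \<inter> Xint X (n + r) \<noteq> {}}. \<Phi> Y))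
            \<le> 2 * jprime \<Phi> * jsecond \<Phi> * real (card (bdry_Phi \<Phi> (Xint X (n + r))))"
      using HR unfolding H_loc_def I_def by simp
  next
    fix L assume L: "finite L" and MsubL: "Xnbhd X (n + r) \<subseteq> L"
    define M where "M = Xnbhd X (n + r)"
    have finM: "finite M" using L MsubL finite_subset unfolding M_def by blast
    have finB: "finite (bdry_Phi \<Phi> M)" using finM unfolding bdry_Phi_def by simp
    have "norm (commutator (sum \<Phi> (Pow L)) (sum \<Phi> (Pow M)))
          \<le> 2 * jprime \<Phi> * jsecond \<Phi> * real (card (bdry_Phi \<Phi> M))"
    proof (rule key_bound[OF _ _ _ _ _ _ _ _ finB Nfin J1 J2 J1nn, where T = "Pow M"])
      show "finite (Pow L)" using L by simp
      show "finite (Pow M)" using finM by simp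
      show "Pow M \<subseteq> Pow L" using MsubL unfolding M_def by blast
      show "\<forall>Y\<in>Pow L. finite Y" using L finite_subset by blast
      show "\<forall>Z\<in>Pow M. finite Z" using finM finite_subset by blast
      show "\<forall>Y\<in>Pow L. \<forall>Z\<in>Pow M. Y \<inter> Z = {} \<longrightarrow> \<Phi> Y * \<Phi> Z = \<Phi> Z * \<Phi> Y"
        using comm L finM finite_subset by (meson PowD)
      show "\<forall>Y\<in>Pow L. \<forall>Z\<in>Pow M. (Y \<notin> Pow M \<or> Z \<notin> Pow M) \<longrightarrow> Y \<inter> Z \<noteq> {} \<longrightarrow>
              \<Phi> Y \<noteq> 0 \<longrightarrow> \<Phi> Z \<noteq> 0 \<longrightarrow> (\<exists>x\<in>bdry_Phi \<Phi> M. x \<in> Y)"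
      proof (intro ballI impI)
        fix Y Z assume Y: "Y \<in> Pow L" and Z: "Z \<in> Pow M" and nT: "Y \<notin> Pow M \<or> Z \<notin> Pow M"
          and YZ: "Y \<inter> Z \<noteq> {}" and nY: "\<Phi> Y \<noteq> 0" and nZ: "\<Phi> Z \<noteq> 0"
        have fY: "finite Y" using Y L finite_subset by blast
        have "Y \<inter> - M \<noteq> {}" using nT Z by blast
        moreover obtain x where "x \<in> Y" "x \<in> M" using YZ Z by blast
        ultimately show "\<exists>x\<in>bdry_Phi \<Phi> M. x \<in> Y" using fY nY unfolding bdry_Phi_def by blast
      qed
    qed auto
    then show "norm (commutator (H_loc \<Phi> L) (H_loc \<Phi> (Xnbhd X (n + r))))
            \<le> 2 * jprime \<Phi> * jsecond \<Phi> * real (card (bdry_Phi \<Phi> (Xnbhd X (n + r))))"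
      unfolding H_loc_def M_def by simp
  qed
qed

end
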